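(* Let $k\in\{0,1,-1\}$, $c\neq0$, $m>0$ with $m\neq1$, $a_1\neq0$, $a_3$ real, $\hat a=(a_1,0,a_3)^T$, and consider the complex system $$\frac{d\hat K}{dt}=\hat K\times\omega(\hat K)+\hat P\times\hat a,\qquad \frac{d\hat P}{dt}=\hat P\times\omega(\hat K)+k\,(\hat K\times\hat a),\qquad \omega(\hat K)=\Big(\frac{m}{c}K_1,\frac{m}{c}K_2,\frac1cK_3\Big)^T.$$ Consider Laurent series solutions $\hat K(t)=t^{-1}\sum_{n\ge0}K_nt^n$, $\hat P(t)=t^{-2}\sum_{n\ge0}P_nt^n$ whose leading coefficients $K_0=(p_0,q_0,r_0)^T$, $P_0=(f_0,g_0,h_0)^T$ have $r_0=0$, i.e. $p_0=0$, $q_0=\frac{2\varepsilon ic}{m}$, $r_0=0$, $f_0=i\varepsilon h_0$, $g_0=0$, $h_0=\frac{2c}{m(a_3+\varepsilon ia_1)}$ with $\varepsilon=\pm1$. Then all such solutions (i.e. all solutions $(K_n,P_n)_{n\ge1}$ of the recursive relations obtained by equating coefficients of equal powers of $t$) are parametrized by at most four arbitrary complex constants; hence they do not provide a general (six-parameter) meromorphic solution of the system.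
   Context: $\times$ is the complex bilinear vector product on $\mathbb{C}^3$; time $t$ is complex. A general meromorphic solution means a family of such Laurent series solutions depending on six arbitrary complex constants (the dimension of the phase space), as is needed for meromorphic solutions on an open set of initial conditions in $\mathbb{C}^6$. *)

theory Defs
  imports "HOL-Analysis.Analysis"
begin

definition cvec3 :: "complex \<Rightarrow> complex \<Rightarrow> complex \<Rightarrow> complex^3" where
  "cvec3 x y z = (\<chi> i. if i = 1 then x else if i = 2 then y else z)"

definition ccross :: "complex^3 \<Rightarrow> complex^3 \<Rightarrow> complex^3" (infixr "\<times>\<^sub>c" 80) where
  "u \<times>\<^sub>c v = cvec3 (u$2 * v$3 - u$3 * v$2) (u$3 * v$1 - u$1 * v$3) (u$1 * v$2 - u$2 * v$1)"

definition omega :: "real \<Rightarrow> real \<Rightarrow> complex^3 \<Rightarrow> complex^3" where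
  "omega m c K = cvec3 (of_real (m/c) * K$1) (of_real (m/c) * K$2) (of_real (1/c) * K$3)"

text \<open>Recursive relations for the coefficients of the formal Laurent series
  K(t) = t^-1 sum K_n t^n, P(t) = t^-2 sum P_n t^n, obtained by equating
  coefficients of t^(n-2) in the K-equation and t^(n-3) in the P-equation, for n >= 1.\<close>
definition laurent_rec ::
  "int \<Rightarrow> real \<Rightarrow> real \<Rightarrow> complex^3 \<Rightarrow> (nat \<Rightarrow> complex^3) \<Rightarrow> (nat \<Rightarrow> complex^3) \<Rightarrow> bool" where
  "laurent_rec k m c a K P \<longleftrightarrow>
     (\<forall>n\<ge>1.
        (of_nat n - 1) *s K n = (\<Sum>i\<le>n. K i \<times>\<^sub>c omega m c (K (n - i))) + P n \<times>\<^sub>c a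
      \<and> (of_nat n - 2) *s P n = (\<Sum>i\<le>n. P i \<times>\<^sub>c omega m c (K (n - i)))
            + (if n \<ge> 2 then of_int k *s (K (n - 2) \<times>\<^sub>c a) else 0))"

inductive poly_fun :: "(('n \<Rightarrow> complex) \<Rightarrow> complex) \<Rightarrow> bool" where
  const: "poly_fun (\<lambda>z. c)"
| var: "poly_fun (\<lambda>z. z i)"
| add: "poly_fun f \<Longrightarrow> poly_fun g \<Longrightarrow> poly_fun (\<lambda>z. f z + g z)"
| mult: "poly_fun f \<Longrightarrow> poly_fun g \<Longrightarrow> poly_fun (\<lambda>z. f z * g z)"

end

theory Submission
  imports Defs
begin

lemma cvec3_comp[simp]: "cvec3 x y z $ 1 = x" "cvec3 x y z $ 2 = y" "cvec3 x y z $ 3 = z"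
  by (simp_all add: cvec3_def)

lemma sum_split: "(n::nat) \<ge> 1 \<Longrightarrow> (\<Sum>i\<le>n. f i) = f 0 + f n + (\<Sum>i\<in>{1..<n}. f i)"
proof (induction n)
  case 0 then show ?case by simp
next
  case (Suc n)
  show ?case
  proof (cases "n = 0")
    case True then show ?thesis by simp
  next
    case False
    then have "(\<Sum>i\<le>Suc n. f i) = f 0 + f n + (\<Sum>i\<in>{1..<n}. f i) + f (Suc n)"
      using Suc by simp
    also have "\<dots> = f 0 + f (Suc n) + (\<Sum>i\<in>{1..<Suc n}. f i)"
      using False by (simp add: sum.atLeastLessThan_Suc algebra_simps)
    finally show ?thesis .
  qed
qed

definition det3 :: "complex \<Rightarrow> complex \<Rightarrow> complex \<Rightarrow> complex \<Rightarrow> complex \<Rightarrow> complex \<Rightarrow> complex \<Rightarrow> complex \<Rightarrow> complex \<Rightarrow> complex" where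
  "det3 a11 a12 a13 a21 a22 a23 a31 a32 a33 =
     a11*(a22*a33 - a23*a32) - a12*(a21*a33 - a23*a31) + a13*(a21*a32 - a22*a31)"

lemma cramer:
  assumes "D = det3 a11 a12 a13 a21 a22 a23 a31 a32 a33" "D \<noteq> 0"
    "a11*u1 + a12*u2 + a13*u3 = r1" "a21*u1 + a22*u2 + a23*u3 = r2" "a31*u1 + a32*u2 + a33*u3 = r3"
  shows "u1 = det3 r1 a12 a13 r2 a22 a23 r3 a32 a33 / D"
    "u2 = det3 a11 r1 a13 a21 r2 a23 a31 r3 a33 / D"
    "u3 = det3 a11 a12 r1 a21 a22 r2 a31 a32 r3 / D"
proof -
  note r = assms(3,4,5)[symmetric]
  have "u1 * D = det3 r1 a12 a13 r2 a22 a23 r3 a32 a33"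
    "u2 * D = det3 a11 r1 a13 a21 r2 a23 a31 r3 a33"
    "u3 * D = det3 a11 a12 r1 a21 a22 r2 a31 a32 r3"
    unfolding assms(1) r det3_def by algebra+
  then show "u1 = det3 r1 a12 a13 r2 a22 a23 r3 a32 a33 / D"
    "u2 = det3 a11 r1 a13 a21 r2 a23 a31 r3 a33 / D"
    "u3 = det3 a11 a12 r1 a21 a22 r2 a31 a32 r3 / D"
    using assms(2) by (simp_all add: eq_divide_eq)
qed

lemma pf_diff: "poly_fun f \<Longrightarrow> poly_fun g \<Longrightarrow> poly_fun (\<lambda>z. f z - g z)"
proof -
  assume "poly_fun f" "poly_fun g"
  then have "poly_fun (\<lambda>z. f z + (-1) * g z)" by (intro poly_fun.intros)
  then show ?thesis by simp
qed

lemma pf_neg: "poly_fun f \<Longrightarrow> poly_fun (\<lambda>z. - f z)"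
proof -
  assume "poly_fun f"
  then have "poly_fun (\<lambda>z. (-1) * f z)" by (intro poly_fun.intros)
  then show ?thesis by simp
qed

lemma pf_divc: "poly_fun f \<Longrightarrow> poly_fun (\<lambda>z. f z / c)"
proof -
  assume "poly_fun f"
  then have "poly_fun (\<lambda>z. f z * (1/c))" by (intro poly_fun.intros)
  then show ?thesis by simp
qed

lemma pf_if: "poly_fun f \<Longrightarrow> poly_fun g \<Longrightarrow> poly_fun (\<lambda>z. if b then f z else g z)"
  by (cases b) simp_all

lemma pf_sum: "(\<And>i. i \<in> S \<Longrightarrow> poly_fun (f i)) \<Longrightarrow> poly_fun (\<lambda>z. \<Sum>i\<in>S. f i z)"
proof (induction S rule: infinite_finite_induct)
  case (infinite S) then show ?case by (simp add: poly_fun.const)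
next
  case empty then show ?case by (simp add: poly_fun.const)
next
  case (insert x F)
  then have "poly_fun (\<lambda>z. f x z + (\<Sum>i\<in>F. f i z))"
    by (intro poly_fun.add) auto
  then show ?case using insert by simp
qed

lemma pf_det3: "poly_fun a \<Longrightarrow> poly_fun b \<Longrightarrow> poly_fun c \<Longrightarrow> poly_fun d \<Longrightarrow> poly_fun e \<Longrightarrow>
  poly_fun f \<Longrightarrow> poly_fun g \<Longrightarrow> poly_fun h \<Longrightarrow> poly_fun i \<Longrightarrow>
  poly_fun (\<lambda>z. det3 (a z) (b z) (c z) (d z) (e z) (f z) (g z) (h z) (i z))"
  unfolding det3_def by (intro pf_diff poly_fun.add poly_fun.mult)

definition pfv :: "(('n \<Rightarrow> complex) \<Rightarrow> complex^3) \<Rightarrow> bool" where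
  "pfv V \<longleftrightarrow> (\<forall>j. poly_fun (\<lambda>z. V z $ j))"

lemma pfv_comp: "pfv V \<Longrightarrow> poly_fun (\<lambda>z. V z $ j)" by (simp add: pfv_def)

lemma pfv_cvec3: "poly_fun x \<Longrightarrow> poly_fun y \<Longrightarrow> poly_fun w \<Longrightarrow> pfv (\<lambda>z. cvec3 (x z) (y z) (w z))"
  unfolding pfv_def cvec3_def by (auto intro: pf_if)

lemma cvec3_eta: "cvec3 (v$1) (v$2) (v$3) = v"
  unfolding cvec3_def by (simp add: vec_eq_iff) (metis exhaust_3)

lemma pfv_I: "poly_fun (\<lambda>z. V z $ 1) \<Longrightarrow> poly_fun (\<lambda>z. V z $ 2) \<Longrightarrow> poly_fun (\<lambda>z. V z $ 3) \<Longrightarrow> pfv V"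
  unfolding pfv_def by (metis exhaust_3)

lemma pfv_const: "pfv (\<lambda>z. v)" by (simp add: pfv_def poly_fun.const)

lemma pfv_add: "pfv U \<Longrightarrow> pfv V \<Longrightarrow> pfv (\<lambda>z. U z + V z)"
  unfolding pfv_def by (auto intro: poly_fun.add)

lemma pfv_scale: "pfv V \<Longrightarrow> pfv (\<lambda>z. c *s V z)"
  unfolding pfv_def by (auto intro: poly_fun.mult poly_fun.const)

lemma pfv_if: "pfv U \<Longrightarrow> pfv V \<Longrightarrow> pfv (\<lambda>z. if b then U z else V z)"
  by (cases b) simp_all

lemma pfv_sum: "(\<And>i. i \<in> S \<Longrightarrow> pfv (f i)) \<Longrightarrow> pfv (\<lambda>z. \<Sum>i\<in>S. f i z)"
  unfolding pfv_def by (auto simp: sum_component intro!: pf_sum)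

lemma pfv_cross: "pfv U \<Longrightarrow> pfv V \<Longrightarrow> pfv (\<lambda>z. U z \<times>\<^sub>c V z)"
  unfolding ccross_def by (intro pfv_cvec3 pf_diff poly_fun.mult pfv_comp)

lemma pfv_omega: "pfv V \<Longrightarrow> pfv (\<lambda>z. omega m c (V z))"
  unfolding omega_def by (intro pfv_cvec3 poly_fun.mult poly_fun.const pfv_comp)

lemma divI: "(d::complex) \<noteq> 0 \<Longrightarrow> X = y * d \<Longrightarrow> X / d = y" by simp

locale TL =
  fixes k :: int and m c a1 a3 :: real and \<epsilon> :: complex
  assumes kk: "k \<in> {0, 1, -1}" and cc: "c \<noteq> 0" and mm: "m > 0" and m1: "m \<noteq> 1"
    and aa1: "a1 \<noteq> 0" and eps: "\<epsilon> = 1 \<or> \<epsilon> = -1"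
begin

definition "A = cvec3 (of_real a1) 0 (of_real a3)"
definition "h = 2 * of_real c / (of_real m * (of_real a3 + \<epsilon> * \<i> * of_real a1))"
definition "K0 = cvec3 0 (2 * \<epsilon> * \<i> * of_real c / of_real m) 0"
definition "P0 = cvec3 (\<i> * \<epsilon> * h) 0 h"
definition "RK K n = (\<Sum>i\<in>{1..<n}. K i \<times>\<^sub>c omega m c (K (n - i)))"
definition "RP K P n = (\<Sum>i\<in>{1..<n}. P i \<times>\<^sub>c omega m c (K (n - i)))
   + (if n \<ge> 2 then of_int k *s (K (n - 2) \<times>\<^sub>c A) else 0)"

definition "mu = complex_of_real (m/c)"
definition "nu = complex_of_real (1/c)"
definition "q = 2 * \<epsilon> * \<i> * of_real c / of_real m"
definition "e = \<i> * \<epsilon> * h"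
abbreviation "A1 \<equiv> complex_of_real a1"
abbreviation "A3 \<equiv> complex_of_real a3"

lemma eqs:
  assumes "K 0 = K0" "P 0 = P0" "laurent_rec k m c A K P" "n \<ge> 1"
  shows
   "(of_nat n - 1) * K n$1 + (mu*q - q*nu) * K n$3 - A3 * P n$2 = RK K n $ 1"
   "(of_nat n - 1) * K n$2 + A3 * P n$1 - A1 * P n$3 = RK K n $ 2"
   "(of_nat n - 1) * K n$3 + A1 * P n$2 = RK K n $ 3"
   "(of_nat n - 2) * P n$1 + h*mu * K n$2 + mu*q * P n$3 = RP K P n $ 1"
   "(of_nat n - 2) * P n$2 - h*mu * K n$1 + e*nu * K n$3 = RP K P n $ 2"
   "(of_nat n - 2) * P n$3 - e*mu * K n$2 - mu*q * P n$1 = RP K P n $ 3"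
proof -
  from assms(3,4) have E1: "(of_nat n - 1) *s K n = (\<Sum>i\<le>n. K i \<times>\<^sub>c omega m c (K (n - i))) + P n \<times>\<^sub>c A"
    and E2: "(of_nat n - 2) *s P n = (\<Sum>i\<le>n. P i \<times>\<^sub>c omega m c (K (n - i)))
            + (if n \<ge> 2 then of_int k *s (K (n - 2) \<times>\<^sub>c A) else 0)"
    unfolding laurent_rec_def by auto
  have E1': "(of_nat n - 1) *s K n = K 0 \<times>\<^sub>c omega m c (K n) + K n \<times>\<^sub>c omega m c (K 0) + RK K n + P n \<times>\<^sub>c A"
    using E1 sum_split[OF assms(4), of "\<lambda>i. K i \<times>\<^sub>c omega m c (K (n - i))"] by (simp add: RK_def)
  have E2': "(of_nat n - 2) *s P n = P 0 \<times>\<^sub>c omega m c (K n) + P n \<times>\<^sub>c omega m c (K 0) + RP K P n"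
    using E2 sum_split[OF assms(4), of "\<lambda>i. P i \<times>\<^sub>c omega m c (K (n - i))"] by (simp add: RP_def add.assoc)
  have m0: "complex_of_real m \<noteq> 0" and c0: "complex_of_real c \<noteq> 0" using mm cc by auto
  have m0r: "m \<noteq> 0" using mm by auto
  note defs = m0 c0 cc m0r mu_def nu_def q_def e_def ccross_def omega_def assms(1,2) K0_def P0_def A_def
  show "(of_nat n - 1) * K n$1 + (mu*q - q*nu) * K n$3 - A3 * P n$2 = RK K n $ 1"
    using arg_cong[OF E1', of "\<lambda>v. v$1"] by (simp add: defs algebra_simps)
  show "(of_nat n - 1) * K n$2 + A3 * P n$1 - A1 * P n$3 = RK K n $ 2"
    using arg_cong[OF E1', of "\<lambda>v. v$2"] by (simp add: defs algebra_simps)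
  show "(of_nat n - 1) * K n$3 + A1 * P n$2 = RK K n $ 3"
    using arg_cong[OF E1', of "\<lambda>v. v$3"] by (simp add: defs algebra_simps)
  show "(of_nat n - 2) * P n$1 + h*mu * K n$2 + mu*q * P n$3 = RP K P n $ 1"
    using arg_cong[OF E2', of "\<lambda>v. v$1"] by (simp add: defs algebra_simps)
  show "(of_nat n - 2) * P n$2 - h*mu * K n$1 + e*nu * K n$3 = RP K P n $ 2"
    using arg_cong[OF E2', of "\<lambda>v. v$2"] by (simp add: defs algebra_simps)
  show "(of_nat n - 2) * P n$3 - e*mu * K n$2 - mu*q * P n$1 = RP K P n $ 3"
    using arg_cong[OF E2', of "\<lambda>v. v$3"] by (simp add: defs algebra_simps)
qed


lemma D0: "A3 + \<epsilon> * \<i> * A1 \<noteq> 0"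
proof
  assume "A3 + \<epsilon> * \<i> * A1 = 0"
  then have "Im (A3 + \<epsilon> * \<i> * A1) = 0" by simp
  then show False using eps aa1 by auto
qed

definition "N n = (of_nat n :: complex)"
abbreviation "sig \<equiv> mu*q - q*nu"
definition "detA n = det3 (N n - 1) sig (-A3) 0 (N n - 1) A1 (-(h*mu)) (e*nu) (N n - 2)"
definition "detB n = det3 (N n - 1) A3 (-A1) (h*mu) (N n - 2) (mu*q) (-(e*mu)) (-(mu*q)) (N n - 2)"
definition "beta = (complex_of_real m - 1) * \<i> * \<epsilon> * A1 * h / complex_of_real c"

lemma h_prop: "h * (complex_of_real m * (A3 + \<epsilon> * \<i> * A1)) = 2 * complex_of_real c"
proof -
  have "complex_of_real m * (A3 + \<epsilon> * \<i> * A1) \<noteq> 0" using D0 mm by simp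
  then show ?thesis unfolding h_def by simp
qed

lemma eps2: "\<epsilon> * \<epsilon> = 1" using eps by auto

lemma detA_closed: "detA n = (N n - 3) * (N n * (N n - 1) + beta)"
proof -
  have m0: "complex_of_real m \<noteq> 0" and c0: "complex_of_real c \<noteq> 0" and m0r: "m \<noteq> 0" using mm cc by auto
  have H: "h * (complex_of_real m * (A3 + \<epsilon> * \<i> * A1)) = 2 * complex_of_real c" by (rule h_prop)
  have I: "\<i> * \<i> = -1" by simp
  show ?thesis
    unfolding detA_def det3_def beta_def mu_def nu_def q_def e_def
    apply (simp add: field_simps m0 c0 cc m0r)
    using H eps2 I by algebra
qed

lemma detB_closed: "detB n = (N n - 2) * (N n - 4) * (N n + 1)"
proof -
  have m0: "complex_of_real m \<noteq> 0" and c0: "complex_of_real c \<noteq> 0" and m0r: "m \<noteq> 0" using mm cc by auto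
  have H: "h * (complex_of_real m * (A3 + \<epsilon> * \<i> * A1)) = 2 * complex_of_real c" by (rule h_prop)
  have I: "\<i> * \<i> = -1" by simp
  show ?thesis
    unfolding detB_def det3_def mu_def nu_def q_def e_def
    apply (simp add: field_simps m0 c0 cc m0r)
    using H eps2 I by algebra
qed


lemma bnz: "m \<noteq> 0" "c \<noteq> 0" "complex_of_real m \<noteq> 0" "complex_of_real c \<noteq> 0" "h \<noteq> 0" "\<epsilon> \<noteq> 0"
  using mm cc h_prop eps by auto

lemma nz: "h * mu \<noteq> 0" "mu * q \<noteq> 0" "A1 \<noteq> 0" "A3 * (mu * q) + A1 * (N 4 - 2) \<noteq> 0"
  "mu * q = 2 * \<epsilon> * \<i>"
proof -
  have m0: "complex_of_real m \<noteq> 0" and c0: "complex_of_real c \<noteq> 0" and m0r: "m \<noteq> 0" using mm cc by auto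
  show mq: "mu * q = 2 * \<epsilon> * \<i>" using m0 c0 by (simp add: of_real_divide mu_def q_def)
  have "h \<noteq> 0" using h_prop c0 by auto
  then show "h * mu \<noteq> 0" using m0r cc by (simp add: mu_def)
  show "mu * q \<noteq> 0" using mq eps by auto
  show "A1 \<noteq> 0" using aa1 by simp
  have R: "Re (A3 * (mu * q) + A1 * (N 4 - 2)) = 2 * a1" unfolding mq N_def using eps by auto
  show "A3 * (mu * q) + A1 * (N 4 - 2) \<noteq> 0"
  proof
    assume "A3 * (mu * q) + A1 * (N 4 - 2) = 0"
    then have "Re (A3 * (mu * q) + A1 * (N 4 - 2)) = 0" by simp
    then show False using R aa1 by simp
  qed
qed

lemma detB_zero: assumes "n \<ge> 1" "detB n = 0" shows "n = 2 \<or> n = 4"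
proof -
  have "N n + 1 \<noteq> 0" unfolding N_def
    by (metis of_nat_Suc of_nat_eq_0_iff nat.distinct(1) add.commute)
  then have "N n - 2 = 0 \<or> N n - 4 = 0" using assms(2) detB_closed by simp
  moreover have "of_nat n = (2::complex) \<Longrightarrow> n = 2" "of_nat n = (4::complex) \<Longrightarrow> n = 4"
    by (metis of_nat_eq_iff of_nat_numeral)+
  ultimately show ?thesis unfolding N_def by auto
qed

lemma detA_unique: assumes "n \<ge> 1" "n' \<ge> 1" "n \<noteq> 3" "n' \<noteq> 3" "detA n = 0" "detA n' = 0"
  shows "n = n'"
proof -
  have "N n - 3 \<noteq> 0" "N n' - 3 \<noteq> 0" using assms(3,4) unfolding N_def
    by (metis eq_iff_diff_eq_0 of_nat_eq_iff of_nat_numeral)+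
  then have "N n * (N n - 1) = - beta" "N n' * (N n' - 1) = - beta"
    using assms(5,6) detA_closed by (simp_all add: eq_neg_iff_add_eq_0)
  then have "N n * (N n - 1) = N n' * (N n' - 1)" by simp
  then have "of_nat (n * (n - 1)) = (of_nat (n' * (n' - 1)) :: complex)"
    using assms(1,2) unfolding N_def by (simp add: of_nat_diff)
  then have E: "n * (n - 1) = n' * (n' - 1)" using of_nat_eq_iff by blast
  show ?thesis
  proof (rule ccontr)
    assume "n \<noteq> n'"
    then consider "n < n'" | "n' < n" by linarith
    then show False
    proof cases
      case 1
      then have "n * (n - 1) < n' * (n' - 1)" using assms(1)
        by (intro mult_strict_mono) auto
      then show False using E by simp
    next
      case 2
      then have "n' * (n' - 1) < n * (n - 1)" using assms(2)
        by (intro mult_strict_mono) auto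
      then show False using E by simp
    qed
  qed
qed

definition solA :: "nat \<Rightarrow> complex^3 \<Rightarrow> complex^3 \<Rightarrow> complex \<Rightarrow> complex \<times> complex \<times> complex" where "solA n r p t = (if detA n \<noteq> 0 then
  (det3 (r$1) sig (-A3) (r$3) (N n - 1) A1 (p$2) (e*nu) (N n - 2) / detA n,
   det3 (N n - 1) (r$1) (-A3) 0 (r$3) A1 (-(h*mu)) (p$2) (N n - 2) / detA n,
   det3 (N n - 1) sig (r$1) 0 (N n - 1) (r$3) (-(h*mu)) (e*nu) (p$2) / detA n)
  else (((N n - 2) * ((r$3 - (N n - 1)*t)/A1) + e*nu*t - p$2)/(h*mu), t, (r$3 - (N n - 1)*t)/A1))"

definition solB :: "nat \<Rightarrow> complex^3 \<Rightarrow> complex^3 \<Rightarrow> complex \<Rightarrow> complex \<times> complex \<times> complex" where "solB n r p t = (if detB n \<noteq> 0 then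
  (det3 (r$2) A3 (-A1) (p$1) (N n - 2) (mu*q) (p$3) (-(mu*q)) (N n - 2) / detB n,
   det3 (N n - 1) (r$2) (-A1) (h*mu) (p$1) (mu*q) (-(e*mu)) (p$3) (N n - 2) / detB n,
   det3 (N n - 1) A3 (r$2) (h*mu) (N n - 2) (p$1) (-(e*mu)) (-(mu*q)) (p$3) / detB n)
  else if n = 2 then ((p$1 - mu*q*t)/(h*mu), -(p$3 + e*mu*((p$1 - mu*q*t)/(h*mu)))/(mu*q), t)
  else (t, ((r$2 - (N n - 1)*t)*(mu*q) + A1*(p$1 - h*mu*t))/(A3*(mu*q) + A1*(N n - 2)),
           (A3*(p$1 - h*mu*t) - (N n - 2)*(r$2 - (N n - 1)*t))/(A3*(mu*q) + A1*(N n - 2))))"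

lemma solA_correct:
  fixes r p :: "complex^3"
  assumes e1: "(N n - 1)*x1 + sig*x3 - A3*y2 = r$1"
    and e3: "(N n - 1)*x3 + A1*y2 = r$3"
    and e5: "(N n - 2)*y2 - h*mu*x1 + e*nu*x3 = p$2"
    and t: "detA n = 0 \<Longrightarrow> t = x3"
  shows "solA n r p t = (x1, x3, y2)"
proof (cases "detA n = 0")
  case True
  then have tt: "t = x3" by (rule t)
  have y2: "(r$3 - (N n - 1)*x3)/A1 = y2" using e3 nz(3) by (simp add: field_simps)
  have x1: "((N n - 2) * y2 + e*nu*x3 - p$2)/(h*mu) = x1"
    unfolding e5[symmetric] by (rule divI[OF nz(1)]) algebra
  show ?thesis using True unfolding solA_def tt y2 x1 by simp
next
  case False
  have a: "(N n - 1)*x1 + sig*x3 + (-A3)*y2 = r$1" using e1 by simp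
  have b: "0*x1 + (N n - 1)*x3 + A1*y2 = r$3" using e3 by simp
  have c: "(-(h*mu))*x1 + (e*nu)*x3 + (N n - 2)*y2 = p$2" using e5 by (simp add: algebra_simps)
  note C = cramer[OF detA_def False a b c]
  show ?thesis using False unfolding solA_def C[symmetric] by simp
qed

lemma solB_correct:
  fixes r p :: "complex^3"
  assumes e2: "(N n - 1)*x2 + A3*y1 - A1*y3 = r$2"
    and e4: "(N n - 2)*y1 + h*mu*x2 + mu*q*y3 = p$1"
    and e6: "(N n - 2)*y3 - e*mu*x2 - mu*q*y1 = p$3"
    and n1: "n \<ge> 1"
    and t2: "detB n = 0 \<Longrightarrow> n = 2 \<Longrightarrow> t = y3"
    and t4: "detB n = 0 \<Longrightarrow> n \<noteq> 2 \<Longrightarrow> t = x2"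
  shows "solB n r p t = (x2, y1, y3)"
proof (cases "detB n = 0")
  case True
  show ?thesis
  proof (cases "n = 2")
    case n2: True
    then have tt: "t = y3" using t2 True by blast
    have N2: "N n - 2 = 0" using n2 unfolding N_def by simp
    have x2: "(p$1 - mu*q*y3)/(h*mu) = x2" using e4 nz(1) bnz unfolding N2 by (simp add: field_simps)
    have y1: "-(p$3 + e*mu*x2)/(mu*q) = y1" using e6 nz(2) bnz unfolding N2 nz(5) by (simp add: field_simps)
    show ?thesis using True n2 unfolding solB_def tt x2 y1 by simp
  next
    case n4: False
    then have tt: "t = x2" using t4 True by blast
    have n4': "n = 4" using detB_zero[OF n1 True] n4 by simp
    let ?d = "A3*(mu*q) + A1*(N n - 2)"
    have d: "?d \<noteq> 0" using nz(4) n4' by simp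
    have y1: "((r$2 - (N n - 1)*x2)*(mu*q) + A1*(p$1 - h*mu*x2))/?d = y1"
      unfolding e2[symmetric] e4[symmetric] by (rule divI[OF d]) algebra
    have y3: "(A3*(p$1 - h*mu*x2) - (N n - 2)*(r$2 - (N n - 1)*x2))/?d = y3"
      unfolding e2[symmetric] e4[symmetric] by (rule divI[OF d]) algebra
    show ?thesis using True n4 unfolding solB_def tt y1 y3 by simp
  qed
next
  case False
  have a: "(N n - 1)*x2 + A3*y1 + (-A1)*y3 = r$2" using e2 by simp
  have b: "(h*mu)*x2 + (N n - 2)*y1 + (mu*q)*y3 = p$1" using e4 by (simp add: algebra_simps)
  have c: "(-(e*mu))*x2 + (-(mu*q))*y1 + (N n - 2)*y3 = p$3" using e6 by (simp add: algebra_simps)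
  note C = cramer[OF detB_def False a b c]
  show ?thesis using False unfolding solB_def C[symmetric] by simp
qed


definition solve :: "(4 \<Rightarrow> complex) \<Rightarrow> nat \<Rightarrow> complex^3 \<Rightarrow> complex^3 \<Rightarrow> (complex^3) \<times> (complex^3)" where
  "solve z n r p = (let a = solA n r p (if n = 3 then z 2 else z 3);
                        b = solB n r p (if n = 2 then z 0 else z 1)
     in (cvec3 (fst a) (fst b) (fst (snd a)), cvec3 (fst (snd b)) (snd (snd a)) (snd (snd b))))"

primrec seq :: "(4 \<Rightarrow> complex) \<Rightarrow> nat \<Rightarrow> (nat \<Rightarrow> complex^3) \<times> (nat \<Rightarrow> complex^3)" where
  "seq z 0 = (\<lambda>_. K0, \<lambda>_. P0)"
| "seq z (Suc n) = (let w = solve z (Suc n) (RK (fst (seq z n)) (Suc n)) (RP (fst (seq z n)) (snd (seq z n)) (Suc n))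
     in ((fst (seq z n))(Suc n := fst w), (snd (seq z n))(Suc n := snd w)))"

lemma pf_solA:
  assumes "pfv R" "pfv Q" "poly_fun T"
  shows "poly_fun (\<lambda>z. fst (solA n (R z) (Q z) (T z)))"
    "poly_fun (\<lambda>z. fst (snd (solA n (R z) (Q z) (T z))))"
    "poly_fun (\<lambda>z. snd (snd (solA n (R z) (Q z) (T z))))"
  using assms by (cases "detA n = 0"; simp add: solA_def; (intro pf_if pf_divc pf_det3 pf_diff pf_neg poly_fun.add poly_fun.mult poly_fun.const pfv_comp; simp))+

lemma pf_solB:
  assumes "pfv R" "pfv Q" "poly_fun T"
  shows "poly_fun (\<lambda>z. fst (solB n (R z) (Q z) (T z)))"
    "poly_fun (\<lambda>z. fst (snd (solB n (R z) (Q z) (T z))))"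
    "poly_fun (\<lambda>z. snd (snd (solB n (R z) (Q z) (T z))))"
proof -
  have B0: "poly_fun (\<lambda>z. fst (solB n (R z) (Q z) (T z))) \<and> poly_fun (\<lambda>z. fst (snd (solB n (R z) (Q z) (T z)))) \<and> poly_fun (\<lambda>z. snd (snd (solB n (R z) (Q z) (T z))))"
    if "detB n \<noteq> 0" using assms that by (simp add: solB_def; intro conjI; (intro pf_if pf_divc pf_det3 pf_diff pf_neg poly_fun.add poly_fun.mult poly_fun.const pfv_comp; simp))
  have B1: "poly_fun (\<lambda>z. fst (solB n (R z) (Q z) (T z))) \<and> poly_fun (\<lambda>z. fst (snd (solB n (R z) (Q z) (T z)))) \<and> poly_fun (\<lambda>z. snd (snd (solB n (R z) (Q z) (T z))))"
    if "detB n = 0" "n = 2" using assms that by (simp add: solB_def; intro conjI; (intro pf_if pf_divc pf_det3 pf_diff pf_neg poly_fun.add poly_fun.mult poly_fun.const pfv_comp; simp))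
  have B2: "poly_fun (\<lambda>z. fst (solB n (R z) (Q z) (T z))) \<and> poly_fun (\<lambda>z. fst (snd (solB n (R z) (Q z) (T z)))) \<and> poly_fun (\<lambda>z. snd (snd (solB n (R z) (Q z) (T z))))"
    if "detB n = 0" "n \<noteq> 2" using assms that by (simp add: solB_def; intro conjI; (intro pf_if pf_divc pf_det3 pf_diff pf_neg poly_fun.add poly_fun.mult poly_fun.const pfv_comp; simp))
  show "poly_fun (\<lambda>z. fst (solB n (R z) (Q z) (T z)))"
    "poly_fun (\<lambda>z. fst (snd (solB n (R z) (Q z) (T z))))"
    "poly_fun (\<lambda>z. snd (snd (solB n (R z) (Q z) (T z))))"
    using B0 B1 B2 by blast+
qed

lemma pf_solve:
  assumes "pfv R" "pfv Q"
  shows "pfv (\<lambda>z. fst (solve z n (R z) (Q z)))" "pfv (\<lambda>z. snd (solve z n (R z) (Q z)))"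
proof -
  have T: "poly_fun (\<lambda>z::4\<Rightarrow>complex. if n = 3 then z 2 else z 3)" "poly_fun (\<lambda>z::4\<Rightarrow>complex. if n = 2 then z 0 else z 1)"
    by (intro pf_if poly_fun.var)+
  show "pfv (\<lambda>z. fst (solve z n (R z) (Q z)))" "pfv (\<lambda>z. snd (solve z n (R z) (Q z)))"
    unfolding solve_def Let_def fst_conv snd_conv
    by (intro pfv_cvec3 pf_solA[OF assms T(1)] pf_solB[OF assms T(2)])+
qed

lemma pf_RK: "(\<And>i. pfv (\<lambda>z. Kf z i)) \<Longrightarrow> pfv (\<lambda>z. RK (Kf z) n)"
  unfolding RK_def by (intro pfv_sum pfv_cross pfv_omega)

lemma pf_RP: "(\<And>i. pfv (\<lambda>z. Kf z i)) \<Longrightarrow> (\<And>i. pfv (\<lambda>z. Pf z i)) \<Longrightarrow> pfv (\<lambda>z. RP (Kf z) (Pf z) n)"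
  unfolding RP_def by (intro pfv_add pfv_sum pfv_cross pfv_omega pfv_if pfv_scale pfv_const)

lemma pf_seq: "pfv (\<lambda>z. fst (seq z n) i) \<and> pfv (\<lambda>z. snd (seq z n) i)"
proof (induction n arbitrary: i)
  case 0 then show ?case by (simp add: pfv_const)
next
  case (Suc n)
  have K: "\<And>i. pfv (\<lambda>z. fst (seq z n) i)" and P: "\<And>i. pfv (\<lambda>z. snd (seq z n) i)" using Suc by auto
  have R1: "pfv (\<lambda>z. RK (fst (seq z n)) (Suc n))" by (rule pf_RK) (rule K)
  have R2: "pfv (\<lambda>z. RP (fst (seq z n)) (snd (seq z n)) (Suc n))" by (rule pf_RP) (rule K, rule P)
  note S = pf_solve[OF R1 R2, where n = "Suc n"]
  show ?case
  proof (cases "i = Suc n")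
    case True then show ?thesis using S by (simp add: Let_def)
  next
    case False then show ?thesis using K P by (simp add: Let_def)
  qed
qed

lemma seq_stable: "i \<le> n \<Longrightarrow> fst (seq z n) i = fst (seq z i) i \<and> snd (seq z n) i = snd (seq z i) i"
proof (induction n)
  case 0 then show ?case by simp
next
  case (Suc n)
  then show ?case by (cases "i = Suc n") (auto simp: Let_def)
qed

definition "zz K P = (\<lambda>j::4. if j = 0 then P 2 $ 3 else if j = 1 then K 4 $ 2 else if j = 2 then K 3 $ 3
   else K (SOME n. n \<ge> 1 \<and> n \<noteq> 3 \<and> detA n = 0) $ 3)"

lemma solve_ok:
  assumes "K 0 = K0" "P 0 = P0" "laurent_rec k m c A K P" "n \<ge> 1"
  shows "solve (zz K P) n (RK K n) (RP K P n) = (K n, P n)"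
proof -
  note E = eqs[OF assms, folded N_def]
  have tA: "(if n = 3 then zz K P 2 else zz K P 3) = K n $ 3" if "detA n = 0"
  proof (cases "n = 3")
    case True then show ?thesis by (simp add: zz_def)
  next
    case False
    let ?n0 = "SOME n. n \<ge> 1 \<and> n \<noteq> 3 \<and> detA n = 0"
    have "?n0 \<ge> 1 \<and> ?n0 \<noteq> 3 \<and> detA ?n0 = 0"
      by (rule someI[of _ n]) (use False that assms(4) in auto)
    then have "?n0 = n" using detA_unique[of ?n0 n] False that assms(4) by auto
    then show ?thesis using False by (simp add: zz_def)
  qed
  have A: "solA n (RK K n) (RP K P n) (if n = 3 then zz K P 2 else zz K P 3) = (K n $ 1, K n $ 3, P n $ 2)"
    by (rule solA_correct) (use E tA in auto)
  have tB2: "(if n = 2 then zz K P 0 else zz K P 1) = P n $ 3" if "n = 2"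
    using that by (simp add: zz_def)
  have tB4: "(if n = 2 then zz K P 0 else zz K P 1) = K n $ 2" if "detB n = 0" "n \<noteq> 2"
    using that detB_zero[OF assms(4)] by (simp add: zz_def)
  have B: "solB n (RK K n) (RP K P n) (if n = 2 then zz K P 0 else zz K P 1) = (K n $ 2, P n $ 1, P n $ 3)"
    by (rule solB_correct) (use E tB2 tB4 assms(4) in auto)
  show ?thesis unfolding solve_def Let_def A B by (simp add: cvec3_eta)
qed

lemma seq_cover:
  assumes "K 0 = K0" "P 0 = P0" "laurent_rec k m c A K P"
  shows "i \<le> n \<Longrightarrow> fst (seq (zz K P) n) i = K i \<and> snd (seq (zz K P) n) i = P i"
proof (induction n arbitrary: i)
  case 0 then show ?case using assms by simp
next
  case (Suc n)
  let ?z = "zz K P"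
  show ?case
  proof (cases "i = Suc n")
    case False then show ?thesis using Suc by (simp add: Let_def)
  next
    case True
    have RK: "RK (fst (seq ?z n)) (Suc n) = RK K (Suc n)"
      unfolding RK_def by (rule sum.cong) (use Suc.IH in auto)
    have RP: "RP (fst (seq ?z n)) (snd (seq ?z n)) (Suc n) = RP K P (Suc n)"
      unfolding RP_def by (intro arg_cong2[where f="(+)"] sum.cong) (use Suc.IH in auto)
    show ?thesis using True solve_ok[OF assms, of "Suc n"] by (simp add: Let_def RK RP)
  qed
qed

end

theorem theorem2:
  fixes k :: int and c m a1 a3 :: real and \<epsilon> :: complex
  assumes "k \<in> {0, 1, -1}" and "c \<noteq> 0" and "m > 0" and "m \<noteq> 1" and "a1 \<noteq> 0"
    and "\<epsilon> = 1 \<or> \<epsilon> = -1"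
  defines "a \<equiv> cvec3 (of_real a1) 0 (of_real a3)"
    and "h0 \<equiv> 2 * of_real c / (of_real m * (of_real a3 + \<epsilon> * \<i> * of_real a1))"
  shows "\<exists>(\<Phi> :: (4 \<Rightarrow> complex) \<Rightarrow> nat \<Rightarrow> complex^3) (\<Psi> :: (4 \<Rightarrow> complex) \<Rightarrow> nat \<Rightarrow> complex^3).
           (\<forall>n j. poly_fun (\<lambda>z. \<Phi> z n $ j) \<and> poly_fun (\<lambda>z. \<Psi> z n $ j)) \<and>
           (\<forall>K P. K 0 = cvec3 0 (2 * \<epsilon> * \<i> * of_real c / of_real m) 0
                 \<and> P 0 = cvec3 (\<i> * \<epsilon> * h0) 0 h0
                 \<and> laurent_rec k m c a K P
                 \<longrightarrow> (\<exists>z. K = \<Phi> z \<and> P = \<Psi> z))"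
proof -
  interpret T: TL k m c a1 a3 \<epsilon> using assms(1-6) by unfold_locales
  have hA: "a = T.A" unfolding a_def T.A_def by simp
  have K0: "T.K0 = cvec3 0 (2 * \<epsilon> * \<i> * of_real c / of_real m) 0" by (simp add: T.K0_def)
  have P0: "T.P0 = cvec3 (\<i> * \<epsilon> * h0) 0 h0" by (simp add: T.P0_def T.h_def h0_def)
  show ?thesis
  proof (rule exI[of _ "\<lambda>z n. fst (T.seq z n) n"], rule exI[of _ "\<lambda>z n. snd (T.seq z n) n"],
      intro conjI allI impI)
    fix n j
    show "poly_fun (\<lambda>z. fst (T.seq z n) n $ j)" "poly_fun (\<lambda>z. snd (T.seq z n) n $ j)"
      using T.pf_seq[of n n] pfv_comp by blast+
  next
    fix K P
    assume H: "K 0 = cvec3 0 (2 * \<epsilon> * \<i> * of_real c / of_real m) 0 \<and>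
      P 0 = cvec3 (\<i> * \<epsilon> * h0) 0 h0 \<and> laurent_rec k m c a K P"
    have H1: "K 0 = T.K0" "P 0 = T.P0" "laurent_rec k m c T.A K P" using H K0 P0 hA by auto
    show "\<exists>z. K = (\<lambda>n. fst (T.seq z n) n) \<and> P = (\<lambda>n. snd (T.seq z n) n)"
      using T.seq_cover[OF H1] by (intro exI[of _ "T.zz K P"]) auto
  qed
qed

end
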